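(* Let $\mathbb{K}$ be a field and let $\mathcal F=\{f_n(q)\}_{n=1}^\infty$ be a nonzero solution (i.e. $f_n\neq 0$ for some $n$) of the functional equation $f_{mn}(q)=f_m(q)f_n(q^m)$ for all $m,n\in\mathbb N$, with $f_n(q)\in\mathbb{K}[q]$. Then: (i) $f_1(q)=1$; (ii) $f_m(q)f_n(q^m)=f_n(q)f_m(q^n)$ for all $m,n\in\mathbb N$; (iii) writing each $f_n$ with $n\in\mathrm{supp}(\mathcal F)$ uniquely as $f_n(q)=a(n)q^{v(f_n)}g_n(q)$ with $a(n)\in\mathbb{K}\setminus\{0\}$, $v(f_n)\in\mathbb N_0$ and $g_n(q)\in\mathbb{K}[q]$ with $g_n(0)=1$, and setting $a(n)=0$, $g_n(q)=0$ for $n\notin\mathrm{supp}(\mathcal F)$, one has $a(mn)=a(m)a(n)$ for all $m,n\in\mathrm{supp}(\mathcal F)$; there is a nonnegative rational number $t$ with $v(f_n)=t(n-1)$ for all $n\in\mathrm{supp}(\mathcal F)$; and $\mathcal G=\{g_n(q)\}_{n=1}^\infty$ is again a solution of the same functional equation with $\mathrm{supp}(\mathcal G)=\mathrm{supp}(\mathcal F)$; (iv) there is a nonnegative rational number $s$ with $\deg(f_n)=s(n-1)$ for all $n\in\mathrm{supp}(\mathcal F)$.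
   Context: $\mathbb N=\{1,2,3,\dots\}$, $\mathbb N_0=\mathbb N\cup\{0\}$. $\mathrm{supp}(\mathcal F)=\{n\in\mathbb N: f_n(q)\ne0\}$. For a nonzero polynomial $f$, $v(f)$ is the smallest exponent of $q$ occurring in $f$ with nonzero coefficient. *)

theory Defs
  imports "HOL-Computational_Algebra.Polynomial"
begin

text \<open>A family F = (f_n) for n in N = {1,2,...} is modelled as a function nat => 'a poly;
  the value at 0 is irrelevant. Substitution q -> q^m is composition with the monomial q^m.\<close>

definition subst_pow :: "'a::comm_semiring_1 poly \<Rightarrow> nat \<Rightarrow> 'a poly" where
  "subst_pow p m = pcompose p (monom 1 m)"

definition is_solution :: "(nat \<Rightarrow> 'a::comm_semiring_1 poly) \<Rightarrow> bool" where
  "is_solution f \<longleftrightarrow> (\<forall>m n. m \<ge> 1 \<longrightarrow> n \<ge> 1 \<longrightarrow> f (m * n) = f m * subst_pow (f n) m)"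

definition supp :: "(nat \<Rightarrow> 'a::zero poly) \<Rightarrow> nat set" where
  "supp f = {n. n \<ge> 1 \<and> f n \<noteq> 0}"

definition vq :: "'a::zero poly \<Rightarrow> nat" where
  "vq p = (LEAST i. coeff p i \<noteq> 0)"

definition acoef :: "(nat \<Rightarrow> 'a::field poly) \<Rightarrow> nat \<Rightarrow> 'a" where
  "acoef f n = (if n \<in> supp f then coeff (f n) (vq (f n)) else 0)"

text \<open>g_n(q) = f_n(q) / (a(n) q^{v(f_n)}); 0 outside the support.\<close>
definition gpart :: "(nat \<Rightarrow> 'a::field poly) \<Rightarrow> nat \<Rightarrow> 'a poly" where
  "gpart f n = (if n \<in> supp f
      then smult (inverse (acoef f n)) (Poly (drop (vq (f n)) (coeffs (f n)))) else 0)"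

end

theory Submission
  imports Defs
begin

definition RR :: "'a::zero poly \<Rightarrow> 'a poly" where
  "RR p = Poly (drop (vq p) (coeffs p))"

lemma coeff_RR: "coeff (RR p) i = coeff p (i + vq p)"
  unfolding RR_def coeff_Poly_eq
  by (auto simp add: nth_default_def nth_default_coeffs_eq[symmetric] add.commute)

lemma vq_ex: "p \<noteq> 0 \<Longrightarrow> coeff p (vq p) \<noteq> 0"
  unfolding vq_def by (rule LeastI_ex) (meson leading_coeff_0_iff)

lemma vq_min: "i < vq p \<Longrightarrow> coeff p i = 0"
  unfolding vq_def using not_less_Least by blast

lemma decomp: "p = monom 1 (vq p) * RR (p::'a::comm_semiring_1 poly)"
  by (rule poly_eqI) (auto simp: coeff_monom_mult coeff_RR vq_min)

lemma RR0: "coeff (RR p) 0 = coeff p (vq p)"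
  by (simp add: coeff_RR)

lemma uniq:
  fixes r :: "'a::comm_semiring_1 poly"
  assumes "p = monom 1 k * r" "coeff r 0 \<noteq> 0"
  shows "vq p = k \<and> RR p = r"
proof -
  have c: "coeff p i = (if i < k then 0 else coeff r (i - k))" for i
    using assms(1) by (simp add: coeff_monom_mult)
  have "vq p = k" unfolding vq_def
    by (rule Least_equality) (use c assms(2) in \<open>auto, metis not_less\<close>)
  moreover have "RR p = r"
    by (rule poly_eqI) (simp add: coeff_RR c \<open>vq p = k\<close>)
  ultimately show ?thesis by simp
qed

lemma pcomp_X_pow: "pcompose ([:0,1:]^k) q = (q::'a::comm_semiring_1 poly)^k"
  by (induct k) (simp_all add: pcompose_mult pcompose_1 pcompose_pCons)

lemma subst_monom: "subst_pow (monom (1::'a::comm_semiring_1) k) m = monom 1 (m*k)"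
  unfolding subst_pow_def
  by (simp add: monom_altdef pcomp_X_pow monom_power) (metis power_mult mult.commute)

lemma subst_mult: "subst_pow (p * q) m = subst_pow p m * subst_pow (q::'a::comm_semiring_1 poly) m"
  by (simp add: subst_pow_def pcompose_mult)

lemma subst_smult: "subst_pow (smult a p) m = smult a (subst_pow (p::'a::comm_semiring_1 poly) m)"
  by (simp add: subst_pow_def pcompose_smult)

lemma subst_coeff0: "m \<ge> 1 \<Longrightarrow> coeff (subst_pow p m) 0 = coeff (p::'a::comm_semiring_1 poly) 0"
  by (simp add: subst_pow_def poly_0_coeff_0[symmetric] poly_pcompose poly_monom power_0_left)

lemma subst_one: "subst_pow p 1 = (p::'a::comm_semiring_1 poly)"
  by (simp add: subst_pow_def monom_altdef)

lemma degree_subst: "m \<ge> 1 \<Longrightarrow> degree (subst_pow p m) = degree (p::'a::field poly) * m"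
  by (simp add: subst_pow_def degree_pcompose degree_monom_eq)

lemma subst_nz: "m \<ge> 1 \<Longrightarrow> p \<noteq> 0 \<Longrightarrow> subst_pow p m \<noteq> (0::'a::field poly)"
  unfolding subst_pow_def using pcompose_eq_0 degree_monom_eq
  by (metis One_nat_def less_le_trans one_neq_zero zero_less_one)

lemma linear_rat:
  fixes V :: "nat \<Rightarrow> nat"
  assumes S1: "\<forall>n\<in>S. n \<ge> 1"
    and eq: "\<forall>m\<in>S. \<forall>n\<in>S. V m * (n - 1) = V n * (m - 1)"
    and V1: "\<forall>n\<in>S. n = 1 \<longrightarrow> V n = 0"
  shows "\<exists>t::rat. t \<ge> 0 \<and> (\<forall>n\<in>S. of_nat (V n) = t * (of_nat n - 1))"
proof (cases "\<exists>n0\<in>S. n0 \<ge> 2")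
  case True
  then obtain n0 where n0: "n0 \<in> S" "n0 \<ge> 2" by blast
  define t where "t = (of_nat (V n0) :: rat) / (of_nat n0 - 1)"
  have pos: "(of_nat n0 - 1 :: rat) > 0" using n0 by simp
  show ?thesis
  proof (intro exI conjI ballI)
    show "t \<ge> 0" unfolding t_def using pos by simp
    fix n assume n: "n \<in> S"
    have "V n * (n0 - 1) = V n0 * (n - 1)" using eq n n0 by blast
    then have "of_nat (V n * (n0 - 1)) = (of_nat (V n0 * (n - 1)) :: rat)" by simp
    then have "of_nat (V n) * (of_nat n0 - 1) = of_nat (V n0) * (of_nat n - (1::rat))"
      using n0 S1 n by (simp add: of_nat_diff)
    then show "of_nat (V n) = t * (of_nat n - 1)"
      unfolding t_def using pos by (simp add: field_simps)
  qed
next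
  case False
  show ?thesis
  proof (intro exI conjI ballI)
    fix n assume n: "n \<in> S"
    then have "n = 1" using False S1 by force
    then show "of_nat (V n) = (0::rat) * (of_nat n - 1)" using V1 n by simp
  qed simp
qed

lemma prod_struct:
  fixes f :: "nat \<Rightarrow> 'a::field poly"
  assumes sol: "is_solution f" and m: "m \<ge> 1" and n: "n \<ge> 1"
    and fm: "f m \<noteq> 0" and fn: "f n \<noteq> 0"
  shows "f (m*n) \<noteq> 0 \<and> vq (f (m*n)) = vq (f m) + m * vq (f n)
     \<and> RR (f (m*n)) = RR (f m) * subst_pow (RR (f n)) m
     \<and> degree (f (m*n)) = degree (f m) + degree (f n) * m"
proof -
  have e: "f (m*n) = f m * subst_pow (f n) m" using sol m n unfolding is_solution_def by blast
  have nz: "f (m*n) \<noteq> 0" using e fm fn subst_nz m by simp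
  have deg: "degree (f (m*n)) = degree (f m) + degree (f n) * m"
    using e fm fn subst_nz[OF m fn] by (simp add: degree_mult_eq degree_subst[OF m])
  have "f (m*n) = (monom 1 (vq (f m)) * RR (f m)) * subst_pow (monom 1 (vq (f n)) * RR (f n)) m"
    using e decomp[of "f m"] decomp[of "f n"] by simp
  also have "\<dots> = monom 1 (vq (f m) + m * vq (f n)) * (RR (f m) * subst_pow (RR (f n)) m)"
    by (simp add: subst_mult subst_monom mult_monom mult_ac)
  finally have d: "f (m*n) = monom 1 (vq (f m) + m * vq (f n)) * (RR (f m) * subst_pow (RR (f n)) m)" .
  have "coeff (RR (f m) * subst_pow (RR (f n)) m) 0 \<noteq> 0"
    using vq_ex[OF fm] vq_ex[OF fn] by (simp add: coeff_mult_0 subst_coeff0[OF m] RR0)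
  from uniq[OF d this] nz deg show ?thesis by simp
qed

theorem mainTheorem7:
  fixes f :: "nat \<Rightarrow> 'a::field poly"
  assumes sol: "is_solution f"
    and nonzero: "\<exists>n\<ge>1. f n \<noteq> 0"
  shows "f 1 = 1 \<and>
    (\<forall>m n. m \<ge> 1 \<longrightarrow> n \<ge> 1 \<longrightarrow>
           f m * subst_pow (f n) m = f n * subst_pow (f m) n) \<and>
    (\<forall>n\<in>supp f. acoef f n \<noteq> 0 \<and> poly (gpart f n) 0 = 1 \<and>
           f n = smult (acoef f n) (monom 1 (vq (f n)) * gpart f n)) \<and>
    (\<forall>m\<in>supp f. \<forall>n\<in>supp f. acoef f (m * n) = acoef f m * acoef f n) \<and>
    (\<exists>t::rat. t \<ge> 0 \<and> (\<forall>n\<in>supp f. of_nat (vq (f n)) = t * (of_nat n - 1))) \<and>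
    (is_solution (gpart f)) \<and>
    (supp (gpart f) = supp f) \<and>
    (\<exists>s::rat. s \<ge> 0 \<and> (\<forall>n\<in>supp f. of_nat (degree (f n)) = s * (of_nat n - 1)))"
proof -
  have E: "\<And>m n. m \<ge> 1 \<Longrightarrow> n \<ge> 1 \<Longrightarrow> f (m*n) = f m * subst_pow (f n) m"
    using sol unfolding is_solution_def by blast
  obtain n0 where n0: "n0 \<ge> 1" "f n0 \<noteq> 0" using nonzero by blast
  have "f n0 = f 1 * f n0" using E[of 1 n0] n0 subst_one[of "f n0"] by simp
  then have f1: "f 1 = 1" using n0 by (metis mult_cancel_right mult_1)
  have comm: "\<forall>m n. m \<ge> 1 \<longrightarrow> n \<ge> 1 \<longrightarrow> f m * subst_pow (f n) m = f n * subst_pow (f m) n"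
    using E by (metis mult.commute)
  have a_eq: "acoef f n = coeff (RR (f n)) 0" if "n \<in> supp f" for n
    using that by (simp add: acoef_def RR0)
  have g_eq: "gpart f n = smult (inverse (acoef f n)) (RR (f n))" if "n \<in> supp f" for n
    using that by (simp add: gpart_def RR_def)
  have suppI: "n \<in> supp f \<longleftrightarrow> n \<ge> 1 \<and> f n \<noteq> 0" for n by (simp add: supp_def)
  have anz: "acoef f n \<noteq> 0" if "n \<in> supp f" for n
    using that vq_ex[of "f n"] by (auto simp: acoef_def supp_def)
  have part3: "\<forall>n\<in>supp f. acoef f n \<noteq> 0 \<and> poly (gpart f n) 0 = 1 \<and>
           f n = smult (acoef f n) (monom 1 (vq (f n)) * gpart f n)"
  proof
    fix n assume n: "n \<in> supp f"
    have "poly (gpart f n) 0 = 1"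
      using anz[OF n] by (simp add: g_eq[OF n] poly_0_coeff_0 a_eq[OF n])
    moreover have "f n = smult (acoef f n) (monom 1 (vq (f n)) * gpart f n)"
      using anz[OF n] decomp[of "f n"] by (simp add: g_eq[OF n] mult_smult_right)
    ultimately show "acoef f n \<noteq> 0 \<and> poly (gpart f n) 0 = 1 \<and>
           f n = smult (acoef f n) (monom 1 (vq (f n)) * gpart f n)" using anz[OF n] by simp
  qed
  have PS: "m*n \<in> supp f \<and> vq (f (m*n)) = vq (f m) + m * vq (f n)
     \<and> RR (f (m*n)) = RR (f m) * subst_pow (RR (f n)) m
     \<and> degree (f (m*n)) = degree (f m) + degree (f n) * m" if "m \<in> supp f" "n \<in> supp f" for m n
    using prod_struct[OF sol, of m n] that by (simp add: supp_def)
  have part4: "\<forall>m\<in>supp f. \<forall>n\<in>supp f. acoef f (m * n) = acoef f m * acoef f n"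
  proof (intro ballI)
    fix m n assume mn: "m \<in> supp f" "n \<in> supp f"
    then have m1: "m \<ge> 1" by (simp add: supp_def)
    show "acoef f (m * n) = acoef f m * acoef f n"
      using PS[OF mn] mn by (simp add: a_eq coeff_mult_0 subst_coeff0[OF m1])
  qed
  have part5: "\<exists>t::rat. t \<ge> 0 \<and> (\<forall>n\<in>supp f. of_nat (vq (f n)) = t * (of_nat n - 1))"
  proof (rule linear_rat)
    show "\<forall>n\<in>supp f. n \<ge> 1" by (simp add: supp_def)
    show "\<forall>n\<in>supp f. n = 1 \<longrightarrow> vq (f n) = 0"
      using f1 vq_min by (auto simp: vq_def)
    show "\<forall>m\<in>supp f. \<forall>n\<in>supp f. vq (f m) * (n - 1) = vq (f n) * (m - 1)"
    proof (intro ballI)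
      fix m n assume mn: "m \<in> supp f" "n \<in> supp f"
      have "vq (f m) + m * vq (f n) = vq (f n) + n * vq (f m)"
        using PS[OF mn] PS[OF mn(2,1)] by (simp add: mult.commute)
      moreover have "m \<ge> 1" "n \<ge> 1" using mn by (auto simp: supp_def)
      ultimately show "vq (f m) * (n - 1) = vq (f n) * (m - 1)"
        by (simp add: algebra_simps diff_mult_distrib2)
    qed
  qed
  have part8: "\<exists>s::rat. s \<ge> 0 \<and> (\<forall>n\<in>supp f. of_nat (degree (f n)) = s * (of_nat n - 1))"
  proof (rule linear_rat)
    show "\<forall>n\<in>supp f. n \<ge> 1" by (simp add: supp_def)
    show "\<forall>n\<in>supp f. n = 1 \<longrightarrow> degree (f n) = 0"
      using f1 by auto
    show "\<forall>m\<in>supp f. \<forall>n\<in>supp f. degree (f m) * (n - 1) = degree (f n) * (m - 1)"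
    proof (intro ballI)
      fix m n assume mn: "m \<in> supp f" "n \<in> supp f"
      have "degree (f m) + degree (f n) * m = degree (f n) + degree (f m) * n"
        using PS[OF mn] PS[OF mn(2,1)] by (simp add: mult.commute)
      moreover have "m \<ge> 1" "n \<ge> 1" using mn by (auto simp: supp_def)
      ultimately show "degree (f m) * (n - 1) = degree (f n) * (m - 1)"
        by (simp add: algebra_simps diff_mult_distrib2)
    qed
  qed
  have part6: "is_solution (gpart f)"
    unfolding is_solution_def
  proof (intro allI impI)
    fix m n :: nat assume m: "m \<ge> 1" and n: "n \<ge> 1"
    show "gpart f (m * n) = gpart f m * subst_pow (gpart f n) m"
    proof (cases "f m = 0 \<or> f n = 0")
      case True
      then have "f (m*n) = 0" using E[OF m n] by (auto simp: subst_pow_def)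
      then show ?thesis using True by (auto simp: gpart_def supp_def subst_pow_def)
    next
      case False
      then have mn: "m \<in> supp f" "n \<in> supp f" using m n by (auto simp: supp_def)
      note P = PS[OF mn]
      show ?thesis
        using P part4 mn
        by (simp add: g_eq subst_smult mult_smult_left mult_smult_right inverse_mult_distrib mult_ac)
    qed
  qed
  have part7: "supp (gpart f) = supp f"
  proof
    show "supp (gpart f) \<subseteq> supp f" by (auto simp: supp_def gpart_def)
    show "supp f \<subseteq> supp (gpart f)"
    proof
      fix n assume n: "n \<in> supp f"
      then have "poly (gpart f n) 0 = 1" using part3 by blast
      then have "gpart f n \<noteq> 0" by auto
      then show "n \<in> supp (gpart f)" using n by (simp add: supp_def)
    qed
  qed
  show ?thesis using f1 comm part3 part4 part5 part6 part7 part8 by blast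
qed

end
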